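(* Let $x,y\in(0,1)$ and $n\in\mathbb{N}$. Let $X,X_1,X_2,Y,Y_1,Y_2$ be random variables with $X,X_1,X_2\sim B(n,x)$ and $Y,Y_1,Y_2\sim B(n,y)$, such that $X,Y$ are independent, $X_1,X_2$ are independent, and $Y_1,Y_2$ are independent. Then \[ F_{X+Y}\leqslant_{\mathrm{cx}}\tfrac12\bigl(F_{X_1+X_2}+F_{Y_1+Y_2}\bigr), \] i.e. $\mathbb{E}\,f(X+Y)\le \tfrac12\bigl(\mathbb{E}\,f(X_1+X_2)+\mathbb{E}\,f(Y_1+Y_2)\bigr)$ for every convex $f:\mathbb{R}\to\mathbb{R}$.
   Context: $B(n,p)$ denotes the binomial distribution with parameters $n\in\mathbb{N}$, $p\in(0,1)$: $P(X=k)=\binom nk p^k(1-p)^{n-k}$, $k=0,\dots,n$. $F_X(t)=P(X<t)$ is the distribution function of $X$. For distribution functions $G,H$ (of probability measures on $\mathbb{R}$ with finite first moment) one writes $G\leqslant_{\mathrm{cx}}H$ if $\int f\,dG\le\int f\,dH$ for all convex $f:\mathbb{R}\to\mathbb{R}$ for which the integrals exist; for random variables, $X\leqslant_{\mathrm{cx}}Y$ means $F_X\leqslant_{\mathrm{cx}}F_Y$, i.e. $\mathbb{E} f(X)\le\mathbb{E} f(Y)$ for all such convex $f$. A convex combination of distribution functions such as $\tfrac12(F_{X_1+X_2}+F_{Y_1+Y_2})$ is the distribution function of the corresponding mixture. *)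

theory Defs
  imports "HOL-Probability.Probability"
begin

end

theory Submission imports Defs begin
lemma pair_pmf_measure:
  fixes A B :: "nat pmf"
  shows "measure_pmf A \<Otimes>\<^sub>M measure_pmf B = measure_pmf (pair_pmf A B)"
proof (rule pair_measure_eqI)
  show "sigma_finite_measure (measure_pmf A)" "sigma_finite_measure (measure_pmf B)"
    by (simp_all add: prob_space_imp_sigma_finite prob_space_measure_pmf)
  have "sets (measure_pmf A \<Otimes>\<^sub>M measure_pmf B) = sets (count_space UNIV \<Otimes>\<^sub>M count_space (UNIV::nat set))"
    by (rule sets_pair_measure_cong) auto
  also have "\<dots> = UNIV" by (subst pair_measure_countable) auto
  finally show "sets (measure_pmf A \<Otimes>\<^sub>M measure_pmf B) = sets (measure_pmf (pair_pmf A B))" by simp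
  fix S T :: "nat set"
  have "emeasure (measure_pmf (pair_pmf A B)) (S \<times> T) = (\<integral>\<^sup>+x. indicator (S \<times> T) x \<partial>pair_pmf A B)"
    by simp
  also have "\<dots> = (\<integral>\<^sup>+a. \<integral>\<^sup>+b. indicator S a * indicator T b \<partial>B \<partial>A)"
    by (simp add: nn_integral_pair_pmf' indicator_times)
  also have "\<dots> = (\<integral>\<^sup>+a. indicator S a * emeasure B T \<partial>A)"
    by (simp add: nn_integral_cmult)
  also have "\<dots> = emeasure A S * emeasure B T"
    by (simp add: nn_integral_multc)
  finally show "emeasure (measure_pmf A) S * emeasure (measure_pmf B) T = emeasure (measure_pmf (pair_pmf A B)) (S \<times> T)" by simp
qed

lemma expect_indep:
  fixes X Y :: "'a \<Rightarrow> nat" and g :: "nat \<Rightarrow> nat \<Rightarrow> real"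
  assumes P: "prob_space M"
    and dX: "distr M (count_space UNIV) X = measure_pmf A"
    and dY: "distr M (count_space UNIV) Y = measure_pmf B"
    and ind: "prob_space.indep_var M (count_space UNIV) X (count_space UNIV) Y"
    and sA: "set_pmf A \<subseteq> {..n}" and sB: "set_pmf B \<subseteq> {..n}"
  shows "prob_space.expectation M (\<lambda>\<omega>. g (X \<omega>) (Y \<omega>)) = (\<Sum>i\<le>n. \<Sum>j\<le>n. g i j * pmf A i * pmf B j)"
proof -
  interpret prob_space M by fact
  have rv: "random_variable (count_space UNIV) X" "random_variable (count_space UNIV) Y"
   and eq: "distr M (count_space UNIV) X \<Otimes>\<^sub>M distr M (count_space UNIV) Y =
      distr M (count_space UNIV \<Otimes>\<^sub>M count_space UNIV) (\<lambda>x. (X x, Y x))"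
    using ind indep_var_distribution_eq by blast+
  have cs: "count_space UNIV \<Otimes>\<^sub>M count_space UNIV = count_space (UNIV :: (nat \<times> nat) set)"
    by (simp add: pair_measure_countable)
  have mp: "(\<lambda>x. (X x, Y x)) \<in> measurable M (count_space UNIV \<Otimes>\<^sub>M count_space UNIV)"
    using rv by (intro measurable_Pair) auto
  have "expectation (\<lambda>\<omega>. g (X \<omega>) (Y \<omega>)) = integral\<^sup>L (distr M (count_space UNIV \<Otimes>\<^sub>M count_space UNIV) (\<lambda>x. (X x, Y x))) (case_prod g)"
    by (subst integral_distr[OF mp]) (auto simp: cs)
  also have "\<dots> = integral\<^sup>L (measure_pmf (pair_pmf A B)) (case_prod g)"
    by (simp add: eq[symmetric] dX dY pair_pmf_measure)
  also have "\<dots> = (\<Sum>p\<in>{..n}\<times>{..n}. case_prod g p * pmf (pair_pmf A B) p)"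
    using sA sB by (intro integral_measure_pmf_real) auto
  also have "\<dots> = (\<Sum>i\<le>n. \<Sum>j\<le>n. g i j * pmf A i * pmf B j)"
    by (simp add: sum.cartesian_product case_prod_beta mult.assoc) (metis pmf_pair prod.collapse)
  finally show ?thesis .
qed
lemma abel_sum:
  fixes d u :: "nat \<Rightarrow> real"
  shows "(\<Sum>i\<le>n. d i * u i) = (\<Sum>i\<le>n. d i) * u n - (\<Sum>i<n. (\<Sum>k\<le>i. d k) * (u (Suc i) - u i))"
  by (induction n) (simp_all add: algebra_simps)

lemma key_ineq:
  fixes d h :: "nat \<Rightarrow> real"
  assumes S0: "(\<Sum>i\<le>n. d i) = 0"
    and E: "\<And>i j. 0 \<le> (\<Sum>k\<le>i. d k) * (\<Sum>k\<le>j. d k)"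
    and C: "\<And>m. 0 \<le> h m - 2 * h (Suc m) + h (Suc (Suc m))"
  shows "0 \<le> (\<Sum>i\<le>n. \<Sum>j\<le>n. d i * d j * h (i + j))"
proof -
  define E where "E i = (\<Sum>k\<le>i. d k)" for i
  define G where "G i = - (\<Sum>j<n. E j * (h (i + Suc j) - h (i + j)))" for i
  have H: "(\<Sum>j\<le>n. d j * h (i + j)) = G i" for i
    using abel_sum[of d "\<lambda>j. h (i + j)" n] S0 by (simp add: G_def E_def)
  have "(\<Sum>i\<le>n. \<Sum>j\<le>n. d i * d j * h (i + j)) = (\<Sum>i\<le>n. d i * (\<Sum>j\<le>n. d j * h (i + j)))"
    by (simp add: sum_distrib_left mult.assoc)
  also have "\<dots> = (\<Sum>i\<le>n. d i * G i)" by (simp add: H)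
  also have "\<dots> = - (\<Sum>i<n. E i * (G (Suc i) - G i))"
    using abel_sum[of d G n] S0 by (simp add: E_def)
  also have "\<dots> = (\<Sum>i<n. E i * (\<Sum>j<n. E j * (h (i + j) - 2 * h (Suc (i + j)) + h (Suc (Suc (i + j))))))"
  proof -
    have "G (Suc i) - G i = - (\<Sum>j<n. E j * (h (i + j) - 2 * h (Suc (i + j)) + h (Suc (Suc (i + j)))))" for i
      unfolding G_def by (simp add: sum_subtractf[symmetric] algebra_simps sum_negf[symmetric])
    then show ?thesis by (simp add: sum_negf)
  qed
  also have "\<dots> = (\<Sum>i<n. \<Sum>j<n. (E i * E j) * (h (i + j) - 2 * h (Suc (i + j)) + h (Suc (Suc (i + j)))))"
    by (simp add: sum_distrib_left mult.assoc)
  also have "\<dots> \<ge> 0"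
  proof (intro sum_nonneg)
    fix i j
    show "0 \<le> E i * E j * (h (i + j) - 2 * h (Suc (i + j)) + h (Suc (Suc (i + j))))"
      using mult_nonneg_nonneg[OF E[of i j] C[of "i+j"]] by (simp add: E_def)
  qed
  finally show ?thesis .
qed

definition bb :: "nat \<Rightarrow> real \<Rightarrow> nat \<Rightarrow> real" where
  "bb n p k = real (n choose k) * p ^ k * (1 - p) ^ (n - k)"

lemma bb_Suc_0: "bb (Suc n) p 0 = (1 - p) * bb n p 0"
  by (simp add: bb_def)

lemma bb_Suc_Suc: "bb (Suc n) p (Suc k) = (1 - p) * bb n p (Suc k) + p * bb n p k"
proof (cases "k < n")
  case True
  then have e: "n - k = Suc (n - Suc k)" by simp
  show ?thesis unfolding bb_def using True
    by (simp add: e algebra_simps)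
next
  case False
  show ?thesis
  proof (cases "k = n")
    case True then show ?thesis by (simp add: bb_def)
  next
    case False
    with \<open>\<not> k < n\<close> have "n < k" by simp
    then show ?thesis by (simp add: bb_def binomial_eq_0 del: binomial_Suc_Suc)
  qed
qed

lemma cdf_Suc: "(\<Sum>i\<le>k. bb (Suc n) p i) = (1 - p) * (\<Sum>i\<le>k. bb n p i) + p * (\<Sum>i<k. bb n p i)"
  by (induction k) (simp_all add: bb_Suc_0 bb_Suc_Suc algebra_simps)

lemma bb_nonneg: "0 \<le> p \<Longrightarrow> p \<le> 1 \<Longrightarrow> 0 \<le> bb n p k"
  by (simp add: bb_def)

lemma cdf_0: "(\<Sum>i\<le>k. bb 0 p i) = 1"
  by (induction k) (simp_all add: bb_def)

lemma cdf_mono: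
  assumes "0 \<le> x" "x \<le> y" "y \<le> 1"
  shows "(\<Sum>i\<le>k. bb n y i) \<le> (\<Sum>i\<le>k. bb n x i)"
  using assms
proof (induction n arbitrary: k)
  case 0 then show ?case by (simp add: cdf_0)
next
  case (Suc n)
  have L: "(\<Sum>i<k. bb n y i) \<le> (\<Sum>i<k. bb n x i)"
  proof (cases k)
    case 0 then show ?thesis by simp
  next
    case (Suc k') then show ?thesis using Suc.IH[of k'] Suc.prems by (simp add: lessThan_Suc_atMost)
  qed
  have CL: "(\<Sum>i\<le>k. bb n y i) = (\<Sum>i<k. bb n y i) + bb n y k"
    by (simp add: lessThan_Suc_atMost[symmetric])
  have "(1 - y) * (\<Sum>i\<le>k. bb n y i) + y * (\<Sum>i<k. bb n y i)
      \<le> (1 - x) * (\<Sum>i\<le>k. bb n y i) + x * (\<Sum>i<k. bb n y i)"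
  proof -
    have "0 \<le> (y - x) * bb n y k" using Suc.prems by (simp add: bb_nonneg)
    then show ?thesis unfolding CL by (simp add: algebra_simps)
  qed
  also have "\<dots> \<le> (1 - x) * (\<Sum>i\<le>k. bb n x i) + x * (\<Sum>i<k. bb n x i)"
    using Suc.IH[of k] Suc.prems L by (intro add_mono mult_left_mono) auto
  finally show ?case by (simp add: cdf_Suc)
qed

lemma bb_sum: "(\<Sum>i\<le>n. bb n p i) = 1"
proof -
  have "(p + (1 - p)) ^ n = (\<Sum>k\<le>n. real (n choose k) * p ^ k * (1 - p) ^ (n - k))"
    by (subst binomial_ring) (simp add: atLeast0AtMost)
  then show ?thesis by (simp add: bb_def)
qed

theorem theorem2:
  fixes M :: "'a measure" and X X1 X2 Y Y1 Y2 :: "'a \<Rightarrow> nat"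
    and x y :: real and n :: nat and f :: "real \<Rightarrow> real"
  assumes "prob_space M"
    and "0 < x" "x < 1" "0 < y" "y < 1"
    and "distr M (count_space UNIV) X = measure_pmf (binomial_pmf n x)"
    and "distr M (count_space UNIV) X1 = measure_pmf (binomial_pmf n x)"
    and "distr M (count_space UNIV) X2 = measure_pmf (binomial_pmf n x)"
    and "distr M (count_space UNIV) Y = measure_pmf (binomial_pmf n y)"
    and "distr M (count_space UNIV) Y1 = measure_pmf (binomial_pmf n y)"
    and "distr M (count_space UNIV) Y2 = measure_pmf (binomial_pmf n y)"
    and "prob_space.indep_var M (count_space UNIV) X (count_space UNIV) Y"
    and "prob_space.indep_var M (count_space UNIV) X1 (count_space UNIV) X2"
    and "prob_space.indep_var M (count_space UNIV) Y1 (count_space UNIV) Y2"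
    and "convex_on UNIV f"
  shows "prob_space.expectation M (\<lambda>\<omega>. f (real (X \<omega> + Y \<omega>)))
         \<le> (prob_space.expectation M (\<lambda>\<omega>. f (real (X1 \<omega> + X2 \<omega>)))
             + prob_space.expectation M (\<lambda>\<omega>. f (real (Y1 \<omega> + Y2 \<omega>)))) / 2"
proof -
  define a where "a = bb n x"
  define b where "b = bb n y"
  define h where "h m = f (real m)" for m
  have px: "pmf (binomial_pmf n x) i = a i" for i
    using assms(2,3) by (simp add: a_def bb_def)
  have py: "pmf (binomial_pmf n y) i = b i" for i
    using assms(4,5) by (simp add: b_def bb_def)
  have sx: "set_pmf (binomial_pmf n x) \<subseteq> {..n}" using assms(2,3) by simp
  have sy: "set_pmf (binomial_pmf n y) \<subseteq> {..n}" using assms(4,5) by simp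
  have E1: "prob_space.expectation M (\<lambda>\<omega>. f (real (X \<omega> + Y \<omega>))) = (\<Sum>i\<le>n. \<Sum>j\<le>n. h (i + j) * a i * b j)"
    using expect_indep[OF assms(1) assms(6) assms(9) assms(12) sx sy, of "\<lambda>i j. h (i + j)"]
    by (simp add: px py h_def)
  have E2: "prob_space.expectation M (\<lambda>\<omega>. f (real (X1 \<omega> + X2 \<omega>))) = (\<Sum>i\<le>n. \<Sum>j\<le>n. h (i + j) * a i * a j)"
    using expect_indep[OF assms(1) assms(7) assms(8) assms(13) sx sx, of "\<lambda>i j. h (i + j)"]
    by (simp add: px h_def)
  have E3: "prob_space.expectation M (\<lambda>\<omega>. f (real (Y1 \<omega> + Y2 \<omega>))) = (\<Sum>i\<le>n. \<Sum>j\<le>n. h (i + j) * b i * b j)"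
    using expect_indep[OF assms(1) assms(10) assms(11) assms(14) sy sy, of "\<lambda>i j. h (i + j)"]
    by (simp add: py h_def)
  define d where "d i = a i - b i" for i
  have S0: "(\<Sum>i\<le>n. d i) = 0"
    by (simp add: d_def sum_subtractf a_def b_def bb_sum)
  have Ed: "(\<Sum>k\<le>i. d k) = (\<Sum>k\<le>i. bb n x k) - (\<Sum>k\<le>i. bb n y k)" for i
    by (simp add: d_def sum_subtractf a_def b_def)
  have Epos: "0 \<le> (\<Sum>k\<le>i. d k) * (\<Sum>k\<le>j. d k)" for i j
  proof (cases "x \<le> y")
    case True
    then show ?thesis unfolding Ed using assms(2,5)
      by (intro mult_nonneg_nonneg) (simp_all add: cdf_mono)
  next
    case False
    then have "0 \<le> (\<Sum>k\<le>i. bb n y k) - (\<Sum>k\<le>i. bb n x k)" "0 \<le> (\<Sum>k\<le>j. bb n y k) - (\<Sum>k\<le>j. bb n x k)"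
      using assms(3,4) by (simp_all add: cdf_mono)
    from mult_nonneg_nonneg[OF this] show ?thesis unfolding Ed by (simp add: algebra_simps)
  qed
  have Cv: "0 \<le> h m - 2 * h (Suc m) + h (Suc (Suc m))" for m
  proof -
    have "f ((1 - 1/2) *\<^sub>R real m + (1/2) *\<^sub>R real (Suc (Suc m))) \<le> (1 - 1/2) * f (real m) + (1/2) * f (real (Suc (Suc m)))"
      by (rule convex_onD[OF assms(15)]) auto
    moreover have "(1 - 1/2) *\<^sub>R real m + (1/2) *\<^sub>R real (Suc (Suc m)) = real (Suc m)" by (simp add: field_simps)
    ultimately show ?thesis by (simp add: h_def)
  qed
  have K: "0 \<le> (\<Sum>i\<le>n. \<Sum>j\<le>n. d i * d j * h (i + j))"
    apply (rule key_ineq) using S0 Epos Cv by simp_all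
  have sw: "(\<Sum>i\<le>n. \<Sum>j\<le>n. h (i + j) * b i * a j) = (\<Sum>i\<le>n. \<Sum>j\<le>n. h (i + j) * a i * b j)"
    by (subst sum.swap) (simp add: add.commute mult.commute mult.left_commute)
  have "(\<Sum>i\<le>n. \<Sum>j\<le>n. d i * d j * h (i + j)) =
     (\<Sum>i\<le>n. \<Sum>j\<le>n. h (i + j) * a i * a j) + (\<Sum>i\<le>n. \<Sum>j\<le>n. h (i + j) * b i * b j)
     - (\<Sum>i\<le>n. \<Sum>j\<le>n. h (i + j) * a i * b j) - (\<Sum>i\<le>n. \<Sum>j\<le>n. h (i + j) * b i * a j)"
    by (simp add: d_def sum.distrib[symmetric] sum_subtractf[symmetric] algebra_simps)
  with K sw show ?thesis unfolding E1 E2 E3 by simp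
qed

end
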